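(* For every $k\ge1$ there is a canonical isomorphism $\operatorname{coker}\beta^{(k)}\cong\mathcal I^kH^2(C)/\mathcal I^{k+1}H^2(C)$.
   Context: Let $\mathcal R$ be a (possibly non-commutative) ring, $\mathcal I\subset\mathcal R$ a two-sided ideal, and $C=[C^1\xrightarrow{d}C^2]$ a complex of left $\mathcal R$-modules concentrated in degrees 1 and 2, so $H^2(C)=\operatorname{coker}d$. The filtration $\{\mathcal I^iC\}_{i\ge0}$ gives a spectral sequence with $Z_k^{i,j}=\ker(\mathcal I^iC^{i+j}\xrightarrow{d}C^{i+j+1}/\mathcal I^{i+k}C^{i+j+1})$, $B_k^{i,j}=\mathcal I^iC^{i+j}\cap d(\mathcal I^{i-k}C^{i+j-1})$ ($\mathcal I^m=\mathcal R$ for $m\le0$), $E_k^{i,j}=Z_k^{i,j}/(Z_{k-1}^{i+1,j-1}+B_{k-1}^{i,j})$, differentials $d_k^{i,j}:E_k^{i,j}\to E_k^{i+k,j+1-k}$ induced by $d$. The $k$-th derived Bockstein map is $\beta^{(k)}=d_k^{0,1}:E_k^{0,1}\to E_k^{k,2-k}$. *)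

theory Defs
  imports "HOL-Algebra.Coset" "HOL-Library.Product_Plus"
begin

definition lmod :: "('r::ring_1 \<Rightarrow> 'm::ab_group_add \<Rightarrow> 'm) \<Rightarrow> bool" where
  "lmod sm \<longleftrightarrow>
     (\<forall>r x y. sm r (x + y) = sm r x + sm r y) \<and>
     (\<forall>r s x. sm (r + s) x = sm r x + sm s x) \<and>
     (\<forall>r s x. sm (r * s) x = sm r (sm s x)) \<and>
     (\<forall>x. sm 1 x = x)"

definition rlinear :: "('r::ring_1 \<Rightarrow> 'a::ab_group_add \<Rightarrow> 'a) \<Rightarrow> ('r \<Rightarrow> 'b::ab_group_add \<Rightarrow> 'b)
    \<Rightarrow> ('a \<Rightarrow> 'b) \<Rightarrow> bool" where
  "rlinear sa sb f \<longleftrightarrow> (\<forall>x y. f (x + y) = f x + f y) \<and> (\<forall>r x. f (sa r x) = sb r (f x))"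

definition two_sided_ideal :: "'r::ring_1 set \<Rightarrow> bool" where
  "two_sided_ideal I \<longleftrightarrow> 0 \<in> I \<and> (\<forall>a\<in>I. \<forall>b\<in>I. a + b \<in> I) \<and> (\<forall>a\<in>I. - a \<in> I) \<and>
     (\<forall>a\<in>I. \<forall>r. r * a \<in> I \<and> a * r \<in> I)"

inductive_set addspan :: "'m::ab_group_add set \<Rightarrow> 'm set" for S where
  zero: "0 \<in> addspan S"
| gen: "x \<in> S \<Longrightarrow> x \<in> addspan S"
| add: "x \<in> addspan S \<Longrightarrow> y \<in> addspan S \<Longrightarrow> x + y \<in> addspan S"
| neg: "x \<in> addspan S \<Longrightarrow> - x \<in> addspan S"

fun idpow :: "'r::ring_1 set \<Rightarrow> nat \<Rightarrow> 'r set" where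
  "idpow I 0 = UNIV"
| "idpow I (Suc n) = addspan {a * b | a b. a \<in> idpow I n \<and> b \<in> I}"

definition modpow :: "('r::ring_1 \<Rightarrow> 'm::ab_group_add \<Rightarrow> 'm) \<Rightarrow> 'r set \<Rightarrow> nat \<Rightarrow> 'm set \<Rightarrow> 'm set" where
  "modpow sm I n M = addspan {sm a m | a m. a \<in> idpow I n \<and> m \<in> M}"

definition ssum :: "'m::ab_group_add set \<Rightarrow> 'm set \<Rightarrow> 'm set" where
  "ssum A B = {a + b | a b. a \<in> A \<and> b \<in> B}"

definition subgrp :: "'m::ab_group_add set \<Rightarrow> 'm monoid" where
  "subgrp A = \<lparr>carrier = A, mult = (+), one = 0\<rparr>"

abbreviation addgrp :: "'m::ab_group_add monoid" where
  "addgrp \<equiv> subgrp UNIV"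

text \<open>A filtered complex inside an ambient abelian group 'm: F i n is the piece F^i C^n
  (with F^i C^n = C^n for i <= 0), and d is the (total) differential.\<close>

definition ssZ :: "(int \<Rightarrow> int \<Rightarrow> 'm::ab_group_add set) \<Rightarrow> ('m \<Rightarrow> 'm) \<Rightarrow> int \<Rightarrow> int \<Rightarrow> int \<Rightarrow> 'm set" where
  "ssZ F d k i j = {x \<in> F i (i + j). d x \<in> F (i + k) (i + j + 1)}"

definition ssB :: "(int \<Rightarrow> int \<Rightarrow> 'm::ab_group_add set) \<Rightarrow> ('m \<Rightarrow> 'm) \<Rightarrow> int \<Rightarrow> int \<Rightarrow> int \<Rightarrow> 'm set" where
  "ssB F d k i j = F i (i + j) \<inter> d ` (F (i - k) (i + j - 1))"

definition ssDen :: "(int \<Rightarrow> int \<Rightarrow> 'm::ab_group_add set) \<Rightarrow> ('m \<Rightarrow> 'm) \<Rightarrow> int \<Rightarrow> int \<Rightarrow> int \<Rightarrow> 'm set" where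
  "ssDen F d k i j = ssum (ssZ F d (k - 1) (i + 1) (j - 1)) (ssB F d (k - 1) i j)"

definition ssE :: "(int \<Rightarrow> int \<Rightarrow> 'm::ab_group_add set) \<Rightarrow> ('m \<Rightarrow> 'm) \<Rightarrow> int \<Rightarrow> int \<Rightarrow> int \<Rightarrow> 'm set monoid" where
  "ssE F d k i j = subgrp (ssZ F d k i j) Mod ssDen F d k i j"

text \<open>The differential d_k : E_k^{i,j} -> E_k^{i+k,j+1-k}, induced by d on representatives.\<close>
definition ssd :: "(int \<Rightarrow> int \<Rightarrow> 'm::ab_group_add set) \<Rightarrow> ('m \<Rightarrow> 'm) \<Rightarrow> int \<Rightarrow> int \<Rightarrow> int \<Rightarrow> 'm set \<Rightarrow> 'm set" where
  "ssd F d k i j c = ssDen F d k (i + k) (j + 1 - k) #>\<^bsub>addgrp\<^esub> d (SOME x. x \<in> c)"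

definition ssd_coker :: "(int \<Rightarrow> int \<Rightarrow> 'm::ab_group_add set) \<Rightarrow> ('m \<Rightarrow> 'm) \<Rightarrow> int \<Rightarrow> int \<Rightarrow> int \<Rightarrow> 'm set set monoid" where
  "ssd_coker F d k i j =
     ssE F d k (i + k) (j + 1 - k) Mod (ssd F d k i j ` carrier (ssE F d k i j))"

text \<open>The complex is realised inside the ambient group 'a \<times> 'b:
  C^1 = 'a \<times> {0}, C^2 = {0} \<times> 'b, all other C^n = 0, total differential (x,y) \<mapsto> (0, d x).
  F i n = I^i C^n (with I^m = R for m <= 0).\<close>
definition twoF :: "('r::ring_1 \<Rightarrow> 'a::ab_group_add \<Rightarrow> 'a) \<Rightarrow> ('r \<Rightarrow> 'b::ab_group_add \<Rightarrow> 'b) \<Rightarrow> 'r set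
    \<Rightarrow> int \<Rightarrow> int \<Rightarrow> ('a \<times> 'b) set" where
  "twoF sa sb I i n =
     (if n = 1 then (\<lambda>x. (x, 0)) ` modpow sa I (nat i) UNIV
      else if n = 2 then (\<lambda>y. (0, y)) ` modpow sb I (nat i) UNIV
      else {0})"

definition twod :: "('a::ab_group_add \<Rightarrow> 'b::ab_group_add) \<Rightarrow> 'a \<times> 'b \<Rightarrow> 'a \<times> 'b" where
  "twod d p = (0, d (fst p))"

text \<open>k-th derived Bockstein map beta^(k) = d_k^{0,1} and its cokernel.\<close>
definition bockstein_coker :: "('r::ring_1 \<Rightarrow> 'a::ab_group_add \<Rightarrow> 'a) \<Rightarrow> ('r \<Rightarrow> 'b::ab_group_add \<Rightarrow> 'b) \<Rightarrow> 'r set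
    \<Rightarrow> ('a \<Rightarrow> 'b) \<Rightarrow> nat \<Rightarrow> ('a \<times> 'b) set set monoid" where
  "bockstein_coker sa sb I d k = ssd_coker (twoF sa sb I) (twod d) (int k) 0 1"

definition H2 :: "('a::ab_group_add \<Rightarrow> 'b::ab_group_add) \<Rightarrow> 'b set monoid" where
  "H2 d = subgrp UNIV Mod range d"

text \<open>I^n H^2(C): the submodule of H^2 generated by I^n acting on classes, i.e. the image of
  I^n C^2 in H^2 (the induced action on H^2 is r [y] = [r y]).\<close>
definition IH2 :: "('r::ring_1 \<Rightarrow> 'b::ab_group_add \<Rightarrow> 'b) \<Rightarrow> 'r set \<Rightarrow> ('a::ab_group_add \<Rightarrow> 'b) \<Rightarrow> nat \<Rightarrow> 'b set set" where
  "IH2 sb I d n = (\<lambda>y. range d #>\<^bsub>addgrp\<^esub> y) ` modpow sb I n UNIV"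

definition gradedH2 :: "('r::ring_1 \<Rightarrow> 'b::ab_group_add \<Rightarrow> 'b) \<Rightarrow> 'r set \<Rightarrow> ('a::ab_group_add \<Rightarrow> 'b) \<Rightarrow> nat \<Rightarrow> 'b set set monoid" where
  "gradedH2 sb I d k = (H2 d)\<lparr>carrier := IH2 sb I d k\<rparr> Mod IH2 sb I d (Suc k)"

text \<open>For y in I^k C^2 = Z_k^{k,2-k}: the class of (0,y) in E_k^{k,2-k}, then in coker beta^(k).\<close>
definition bock_class :: "('r::ring_1 \<Rightarrow> 'a::ab_group_add \<Rightarrow> 'a) \<Rightarrow> ('r \<Rightarrow> 'b::ab_group_add \<Rightarrow> 'b) \<Rightarrow> 'r set
    \<Rightarrow> ('a \<Rightarrow> 'b) \<Rightarrow> nat \<Rightarrow> 'b \<Rightarrow> ('a \<times> 'b) set set" where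
  "bock_class sa sb I d k y =
     (let F = twoF sa sb I; D = twod d; k' = int k in
      (ssd F D k' 0 1 ` carrier (ssE F D k' 0 1))
        #>\<^bsub>ssE F D k' (0 + k') (1 + 1 - k')\<^esub> (ssDen F D k' (0 + k') (1 + 1 - k') #>\<^bsub>addgrp\<^esub> (0, y)))"

definition gr_class :: "('r::ring_1 \<Rightarrow> 'b::ab_group_add \<Rightarrow> 'b) \<Rightarrow> 'r set \<Rightarrow> ('a::ab_group_add \<Rightarrow> 'b) \<Rightarrow> nat \<Rightarrow> 'b \<Rightarrow> 'b set set" where
  "gr_class sb I d k y = IH2 sb I d (Suc k) #>\<^bsub>H2 d\<^esub> (range d #>\<^bsub>addgrp\<^esub> y)"

end

theory Submission
  imports Defs
begin


definition addsub :: "'m::ab_group_add set \<Rightarrow> bool" where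
  "addsub S \<longleftrightarrow> 0 \<in> S \<and> (\<forall>x\<in>S. \<forall>y\<in>S. x + y \<in> S) \<and> (\<forall>x\<in>S. - x \<in> S)"

definition rc :: "'m::ab_group_add set \<Rightarrow> 'm \<Rightarrow> 'm set" where
  "rc N a = (\<lambda>h. h + a) ` N"

lemma addsubD: assumes "addsub S" shows "0 \<in> S" "x \<in> S \<Longrightarrow> y \<in> S \<Longrightarrow> x + y \<in> S"
   "x \<in> S \<Longrightarrow> - x \<in> S" "x \<in> S \<Longrightarrow> y \<in> S \<Longrightarrow> x - y \<in> S"
proof -
  have s: "0 \<in> S" "\<forall>x\<in>S. \<forall>y\<in>S. x + y \<in> S" "\<forall>x\<in>S. - x \<in> S"
    using assms unfolding addsub_def by simp_all
  show "0 \<in> S" by (rule s(1))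
  show "x \<in> S \<Longrightarrow> y \<in> S \<Longrightarrow> x + y \<in> S" using s(2) by simp
  show "x \<in> S \<Longrightarrow> - x \<in> S" using s(3) by simp
  show "x \<in> S \<Longrightarrow> y \<in> S \<Longrightarrow> x - y \<in> S"
  proof -
    assume "x \<in> S" "y \<in> S"
    then have "x + (- y) \<in> S" using s(2,3) by blast
    then show ?thesis by simp
  qed
qed

lemma addsub_addspan: "addsub (addspan X)"
  unfolding addsub_def by (simp add: addspan.intros)

lemma addspan_sub: assumes "addsub S" "X \<subseteq> S" shows "addspan X \<subseteq> S"
proof
  fix x assume "x \<in> addspan X" then show "x \<in> S"
  proof induct
    case zero then show ?case by (rule addsubD(1)[OF assms(1)])
  next
    case (gen x) then show ?case using assms(2) by blast
  next
    case (add x y) then show ?case using addsubD(2)[OF assms(1)] by blast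
  next
    case (neg x) then show ?case using addsubD(3)[OF assms(1)] by blast
  qed
qed

lemma addspan_mono: "X \<subseteq> Y \<Longrightarrow> addspan X \<subseteq> addspan Y"
  by (rule addspan_sub[OF addsub_addspan]) (auto intro: addspan.gen)

lemma addsub_modpow: "addsub (modpow sm I n M)"
  unfolding modpow_def by (rule addsub_addspan)

lemma addsub_ssum: assumes A: "addsub A" and B: "addsub B" shows "addsub (ssum A B)"
proof -
  have "0 \<in> ssum A B" unfolding ssum_def using addsubD(1)[OF A] addsubD(1)[OF B]
    by (metis (mono_tags, lifting) add_0 mem_Collect_eq)
  moreover have "x + y \<in> ssum A B" if hx: "x \<in> ssum A B" and hy: "y \<in> ssum A B" for x y
  proof -
    obtain a1 b1 where "a1 \<in> A" "b1 \<in> B" "x = a1 + b1" using hx unfolding ssum_def by blast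
    moreover obtain a2 b2 where "a2 \<in> A" "b2 \<in> B" "y = a2 + b2" using hy unfolding ssum_def by blast
    moreover have "a1 + b1 + (a2 + b2) = (a1 + a2) + (b1 + b2)" by (simp add: add_ac)
    ultimately have "x + y = (a1 + a2) + (b1 + b2)" "a1 + a2 \<in> A" "b1 + b2 \<in> B"
      using addsubD(2)[OF A] addsubD(2)[OF B] by auto
    then show ?thesis unfolding ssum_def by blast
  qed
  moreover have "- x \<in> ssum A B" if hx: "x \<in> ssum A B" for x
  proof -
    obtain a1 b1 where "a1 \<in> A" "b1 \<in> B" "x = a1 + b1"
      using hx unfolding ssum_def by blast
    moreover have "- (a1 + b1) = (- a1) + (- b1)" by simp
    ultimately have "- x = (- a1) + (- b1)" "- a1 \<in> A" "- b1 \<in> B"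
      using addsubD(3)[OF A] addsubD(3)[OF B] by auto
    then show ?thesis unfolding ssum_def by blast
  qed
  ultimately show ?thesis unfolding addsub_def by (intro conjI ballI) auto
qed

lemma addsub_Int: "addsub A \<Longrightarrow> addsub B \<Longrightarrow> addsub (A \<inter> B)"
  unfolding addsub_def by auto

lemma addsub_image: assumes "addsub A" "\<And>x y. f (x + y) = f x + f y" shows "addsub (f ` A)"
proof -
  have f0: "f 0 = 0" using assms(2)[of 0 0] by simp
  have fn: "f (- x) = - f x" for x
  proof -
    have "f x + f (- x) = 0" using assms(2)[of x "- x"] f0 by simp
    then show ?thesis by (rule minus_unique[symmetric])
  qed
  have "f 0 \<in> f ` A" using addsubD(1)[OF assms(1)] by blast
  then have "0 \<in> f ` A" by (simp add: f0)
  moreover have "x + y \<in> f ` A" if hx: "x \<in> f ` A" and hy: "y \<in> f ` A" for x y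
  proof -
    obtain a b where ab: "a \<in> A" "b \<in> A" "x = f a" "y = f b" using hx hy by blast
    then have "f (a + b) \<in> f ` A" using addsubD(2)[OF assms(1)] by blast
    then show ?thesis using ab assms(2) by simp
  qed
  moreover have "- x \<in> f ` A" if hx: "x \<in> f ` A" for x
  proof -
    obtain a where ab: "a \<in> A" "x = f a" using hx by blast
    then have "f (- a) \<in> f ` A" using addsubD(3)[OF assms(1)] by blast
    then show ?thesis using ab fn by simp
  qed
  ultimately show ?thesis unfolding addsub_def by (intro conjI ballI) auto
qed

lemma rc_mem: "addsub N \<Longrightarrow> a \<in> rc N a"
proof -
  assume "addsub N"
  then have "0 + a \<in> rc N a" unfolding rc_def using addsubD(1) by blast
  then show ?thesis by simp
qed

lemma rc_eq_iff: assumes "addsub N" shows "rc N a = rc N b \<longleftrightarrow> a - b \<in> N"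
proof
  assume "rc N a = rc N b"
  then have "a \<in> rc N b" using rc_mem[OF assms] by metis
  then obtain h where "h \<in> N" "a = h + b" unfolding rc_def by auto
  then show "a - b \<in> N" by simp
next
  assume h: "a - b \<in> N"
  have *: "rc N a \<subseteq> rc N b" if "a - b \<in> N" for a b
  proof
    fix x assume "x \<in> rc N a"
    then obtain h where "h \<in> N" "x = h + a" unfolding rc_def by auto
    then have "x = (h + (a - b)) + b" "h + (a - b) \<in> N" using that addsubD[OF assms] by auto
    then show "x \<in> rc N b" unfolding rc_def by blast
  qed
  have "b - a \<in> N" using addsubD(3)[OF assms h] by simp
  then show "rc N a = rc N b" using * h by blast
qed

lemma ssum_rc: assumes "addsub N" shows "ssum (rc N a) (rc N b) = rc N (a + b)"
proof (rule equalityI; rule subsetI)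
  fix x assume "x \<in> ssum (rc N a) (rc N b)"
  then obtain h1 h2 where "h1 \<in> N" "h2 \<in> N" "x = (h1 + h2) + (a + b)"
    unfolding ssum_def rc_def by (auto simp: algebra_simps)
  then show "x \<in> rc N (a + b)" unfolding rc_def using addsubD[OF assms] by blast
next
  fix x assume "x \<in> rc N (a + b)"
  then obtain h where "h \<in> N" "x = (h + a) + (0 + b)" unfolding rc_def by (auto simp: algebra_simps)
  then show "x \<in> ssum (rc N a) (rc N b)" unfolding ssum_def rc_def using addsubD[OF assms] by blast
qed

lemma r_coset_eq: "r_coset G H a = (\<lambda>h. h \<otimes>\<^bsub>G\<^esub> a) ` H"
  unfolding r_coset_def by auto

lemma set_mult_eq: "set_mult G A B = {a \<otimes>\<^bsub>G\<^esub> b | a b. a \<in> A \<and> b \<in> B}"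
  unfolding set_mult_def by auto

lemma r_coset_subgrp: "r_coset (subgrp A) N a = rc N a"
  unfolding r_coset_eq rc_def subgrp_def by simp

lemma set_mult_subgrp: "set_mult (subgrp A) X Y = ssum X Y"
  unfolding set_mult_eq ssum_def subgrp_def by simp

lemma ssumI: "a \<in> A \<Longrightarrow> b \<in> B \<Longrightarrow> a + b \<in> ssum A B"
  unfolding ssum_def by blast
lemma ssumE: "x \<in> ssum A B \<Longrightarrow> (\<And>a b. a \<in> A \<Longrightarrow> b \<in> B \<Longrightarrow> x = a + b \<Longrightarrow> P) \<Longrightarrow> P"
  unfolding ssum_def by blast

lemma rc_memE: "x \<in> rc N a \<Longrightarrow> (\<And>t. t \<in> N \<Longrightarrow> x = t + a \<Longrightarrow> P) \<Longrightarrow> P"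
  unfolding rc_def by blast

lemma rc_some: "0 \<in> N \<Longrightarrow> (SOME p. p \<in> rc N a) \<in> rc N a"
proof -
  assume "0 \<in> N"
  then have "0 + a \<in> rc N a" unfolding rc_def by (rule imageI)
  then show ?thesis by (rule someI)
qed

lemma subgrp_mult[simp]: "x \<otimes>\<^bsub>subgrp A\<^esub> y = x + y"
  by (simp add: subgrp_def)
lemma carrier_subgrp[simp]: "carrier (subgrp A) = A"
  by (simp add: subgrp_def)
lemma rc_zero: "rc N 0 = N" by (simp add: rc_def)
lemma zero_modpow[simp]: "0 \<in> modpow sm I n M"
  unfolding modpow_def by (rule addspan.zero)

lemma cg_image:
  fixes G :: "('c, 'z) monoid_scheme" and f :: "'m::ab_group_add \<Rightarrow> 'c"
  assumes S: "addsub S" and car: "carrier G = f ` S"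
    and mul: "\<And>a b. a \<in> S \<Longrightarrow> b \<in> S \<Longrightarrow> f a \<otimes>\<^bsub>G\<^esub> f b = f (a + b)"
    and one: "\<one>\<^bsub>G\<^esub> = f 0"
  shows "comm_group G"
proof (rule comm_groupI)
  show "x \<otimes>\<^bsub>G\<^esub> y \<in> carrier G" if "x \<in> carrier G" "y \<in> carrier G" for x y
    using that addsubD[OF S] by (auto simp: car mul)
  show "\<one>\<^bsub>G\<^esub> \<in> carrier G" using addsubD[OF S] by (auto simp: car one)
  show "x \<otimes>\<^bsub>G\<^esub> y \<otimes>\<^bsub>G\<^esub> z = x \<otimes>\<^bsub>G\<^esub> (y \<otimes>\<^bsub>G\<^esub> z)"
    if "x \<in> carrier G" "y \<in> carrier G" "z \<in> carrier G" for x y z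
    using that addsubD[OF S] by (auto simp: car mul add.assoc)
  show "x \<otimes>\<^bsub>G\<^esub> y = y \<otimes>\<^bsub>G\<^esub> x" if "x \<in> carrier G" "y \<in> carrier G" for x y
    using that addsubD[OF S] by (auto simp: car mul add.commute)
  show "\<one>\<^bsub>G\<^esub> \<otimes>\<^bsub>G\<^esub> x = x" if "x \<in> carrier G" for x
    using that addsubD[OF S] by (auto simp: car mul one)
  show "\<exists>y\<in>carrier G. y \<otimes>\<^bsub>G\<^esub> x = \<one>\<^bsub>G\<^esub>" if "x \<in> carrier G" for x
  proof -
    from that car obtain a where a: "a \<in> S" "x = f a" by blast
    then have "f (- a) \<in> carrier G" "f (- a) \<otimes>\<^bsub>G\<^esub> x = \<one>\<^bsub>G\<^esub>"
      using addsubD[OF S] by (auto simp: car mul one)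
    then show ?thesis by blast
  qed
qed



lemma idpow_right: assumes "two_sided_ideal I" shows "a \<in> idpow I n \<Longrightarrow> a * r \<in> idpow I n"
proof (induction n arbitrary: a r)
  case 0 then show ?case by simp
next
  case (Suc n)
  from Suc.prems have "a \<in> addspan {a * b |a b. a \<in> idpow I n \<and> b \<in> I}" by simp
  then have "a * r \<in> addspan {a * b |a b. a \<in> idpow I n \<and> b \<in> I}"
  proof (induction arbitrary: r)
    case zero then show ?case by (simp add: addspan.zero)
  next
    case (gen x)
    then obtain u v where "x = u * v" "u \<in> idpow I n" "v \<in> I" by auto
    then have "x * r = u * (v * r)" "v * r \<in> I" using assms unfolding two_sided_ideal_def
      by (auto simp: mult.assoc)
    then show ?case using \<open>u \<in> idpow I n\<close> by (auto intro!: addspan.gen)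
  next
    case (add x y) then show ?case by (simp add: distrib_right addspan.add)
  next
    case (neg x) then show ?case by (simp add: addspan.neg)
  qed
  then show ?case by simp
qed

lemma addsub_idpow: "addsub (idpow I n)"
  by (cases n) (auto simp: addsub_def addsub_addspan[unfolded addsub_def])

lemma idpow_Suc_sub: assumes "two_sided_ideal I" shows "idpow I (Suc n) \<subseteq> idpow I n"
proof -
  have "{a * b |a b. a \<in> idpow I n \<and> b \<in> I} \<subseteq> idpow I n" using idpow_right[OF assms] by auto
  then show ?thesis by (simp add: addspan_sub[OF addsub_idpow])
qed

lemma modpow_Suc_sub: assumes "two_sided_ideal I" shows "modpow sm I (Suc n) M \<subseteq> modpow sm I n M"
  unfolding modpow_def by (rule addspan_mono) (use idpow_Suc_sub[OF assms, of n] in blast)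

lemma modpow0: assumes "\<And>m. sm 1 m = m" shows "modpow sm I 0 UNIV = UNIV"
proof -
  have "m \<in> modpow sm I 0 UNIV" for m
    unfolding modpow_def by (rule addspan.gen) (use assms in \<open>auto intro!: exI[of _ 1]\<close>)
  then show ?thesis by auto
qed

lemma F1: "twoF sa sb I i 1 = (\<lambda>x. (x, 0)) ` modpow sa I (nat i) UNIV"
  by (simp add: twoF_def)
lemma F2: "twoF sa sb I i 2 = (\<lambda>y. (0, y)) ` modpow sb I (nat i) UNIV"
  by (simp add: twoF_def)
lemma Fo: "n \<noteq> 1 \<Longrightarrow> n \<noteq> 2 \<Longrightarrow> twoF sa sb I i n = {0}"
  by (simp add: twoF_def)

lemma twod_simp: "twod d p = (0, d (fst p))" by (simp add: twod_def)

context
  fixes sa :: "'r::ring_1 \<Rightarrow> 'a::ab_group_add \<Rightarrow> 'a"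
    and sb :: "'r \<Rightarrow> 'b::ab_group_add \<Rightarrow> 'b"
    and I :: "'r set"
    and d :: "'a \<Rightarrow> 'b"
    and k :: nat
  assumes lsa: "lmod sa" and Iid: "two_sided_ideal I" and dlin: "rlinear sa sb d" and k1: "k \<ge> 1"
begin

abbreviation "Mk \<equiv> modpow sb I k UNIV"
abbreviation "Mk1 \<equiv> modpow sb I (Suc k) UNIV"
abbreviation "R \<equiv> range d"
abbreviation "T \<equiv> ssum Mk1 R"

lemma d_add: "d (x + y) = d x + d y" using dlin unfolding rlinear_def by simp
lemma d_0: "d 0 = 0" using d_add[of 0 0] by simp
lemma addsub_R: "addsub R"
  by (rule addsub_image) (auto simp: addsub_def d_add)
lemma addsub_T: "addsub T" by (rule addsub_ssum[OF addsub_modpow addsub_R])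
lemma Mk1_sub: "Mk1 \<subseteq> Mk" by (rule modpow_Suc_sub[OF Iid])

lemma gr_eq: "gr_class sb I d k y = (\<lambda>y'. rc R (y' + y)) ` Mk1"
  unfolding gr_class_def IH2_def r_coset_subgrp
  by (auto simp: r_coset_eq H2_def FactGroup_def set_mult_subgrp ssum_rc[OF addsub_R] image_image)

lemma IH2_eq: "IH2 sb I d n = rc R ` modpow sb I n UNIV"
  unfolding IH2_def r_coset_subgrp by simp

lemma gr_carrier: "carrier (gradedH2 sb I d k) = gr_class sb I d k ` Mk"
proof -
  have e: "r_coset ((H2 d)\<lparr>carrier := C\<rparr>) H X = r_coset (H2 d) H X" for C H X
    by (simp add: r_coset_def)
  show ?thesis
    unfolding gradedH2_def gr_class_def
    by (auto simp: FactGroup_def RCOSETS_def e IH2_eq r_coset_subgrp)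
qed

lemma gr_one: "\<one>\<^bsub>gradedH2 sb I d k\<^esub> = gr_class sb I d k 0"
  unfolding gradedH2_def gr_eq by (simp add: FactGroup_def IH2_eq)

lemma gr_mult: "gr_class sb I d k a \<otimes>\<^bsub>gradedH2 sb I d k\<^esub> gr_class sb I d k b = gr_class sb I d k (a + b)"
proof -
  have "gr_class sb I d k a \<otimes>\<^bsub>gradedH2 sb I d k\<^esub> gr_class sb I d k b
     = {ssum A B | A B. A \<in> gr_class sb I d k a \<and> B \<in> gr_class sb I d k b}"
    unfolding gradedH2_def by (simp add: FactGroup_def set_mult_eq H2_def set_mult_subgrp ssum_def)
  also have "\<dots> = gr_class sb I d k (a + b)"
  proof (rule equalityI; rule subsetI)
    fix X assume "X \<in> {ssum A B | A B. A \<in> gr_class sb I d k a \<and> B \<in> gr_class sb I d k b}"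
    then obtain u v where uv: "u \<in> Mk1" "v \<in> Mk1" "X = ssum (rc R (u + a)) (rc R (v + b))"
      unfolding gr_eq by blast
    then have "X = rc R ((u + v) + (a + b))" by (simp add: ssum_rc[OF addsub_R] add_ac)
    moreover have "u + v \<in> Mk1" using uv addsubD(2)[OF addsub_modpow] by blast
    ultimately show "X \<in> gr_class sb I d k (a + b)" unfolding gr_eq by blast
  next
    fix X assume "X \<in> gr_class sb I d k (a + b)"
    then obtain w where w: "w \<in> Mk1" "X = rc R (w + (a + b))" unfolding gr_eq by blast
    then have "X = ssum (rc R (w + a)) (rc R (0 + b))" by (simp add: ssum_rc[OF addsub_R] add_ac)
    moreover have "rc R (w + a) \<in> gr_class sb I d k a" "rc R (0 + b) \<in> gr_class sb I d k b"
      unfolding gr_eq using w zero_modpow[of sb I "Suc k" UNIV] by blast+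
    ultimately show "X \<in> {ssum A B | A B. A \<in> gr_class sb I d k a \<and> B \<in> gr_class sb I d k b}"
      by blast
  qed
  finally show ?thesis .
qed

lemma gr_group: "comm_group (gradedH2 sb I d k)"
  by (rule cg_image[OF addsub_modpow gr_carrier]) (auto simp: gr_mult gr_one)

lemma gr_iff: "gr_class sb I d k a = gr_class sb I d k b \<longleftrightarrow> a - b \<in> T"
proof
  assume "gr_class sb I d k a = gr_class sb I d k b"
  moreover have "rc R (0 + a) \<in> gr_class sb I d k a"
    unfolding gr_eq using addsubD(1)[OF addsub_modpow] by blast
  ultimately obtain y' where y': "y' \<in> Mk1" "rc R (0 + a) = rc R (y' + b)"
    unfolding gr_eq by auto
  then have "a - (y' + b) \<in> R" using rc_eq_iff[OF addsub_R] by simp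
  then obtain x where "a - (y' + b) = d x" by auto
  then have "a - b = y' + d x" by (simp add: algebra_simps)
  then show "a - b \<in> T" unfolding ssum_def using y' by blast
next
  have *: "gr_class sb I d k a \<subseteq> gr_class sb I d k b" if "a - b \<in> T" for a b
  proof
    fix X assume "X \<in> gr_class sb I d k a"
    then obtain y' where y': "y' \<in> Mk1" "X = rc R (y' + a)" unfolding gr_eq by auto
    from that obtain m x where m: "m \<in> Mk1" "a - b = m + d x" unfolding ssum_def by auto
    have "rc R (y' + a) = rc R ((y' + m) + b)"
      using rc_eq_iff[OF addsub_R] m by (simp add: algebra_simps)
    moreover have "y' + m \<in> Mk1" using addsubD[OF addsub_modpow] y' m by blast
    ultimately show "X \<in> gr_class sb I d k b" unfolding gr_eq using y' by blast
  qed
  assume h: "a - b \<in> T"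
  then have "b - a \<in> T" using addsubD(3)[OF addsub_T h] by simp
  then show "gr_class sb I d k a = gr_class sb I d k b" using * h by blast
qed



abbreviation "FF \<equiv> twoF sa sb I"
abbreviation "DD \<equiv> twod d"
abbreviation "KK \<equiv> int k"
abbreviation "PP \<equiv> (\<lambda>y::'b. (0::'a, y))"
abbreviation "QQ \<equiv> (\<lambda>x::'a. (x, 0::'b))"
definition "Dtc = ssum (PP ` Mk1) (PP ` Mk \<inter> DD ` (QQ ` modpow sa I (Suc 0) UNIV))"
abbreviation "Zs \<equiv> QQ ` {x. d x \<in> Mk}"
abbreviation "Ds \<equiv> ssDen FF DD KK 0 1"
abbreviation "Et \<equiv> ssE FF DD KK KK (2 - KK)"
abbreviation "Es \<equiv> ssE FF DD KK 0 1"

definition hh where "hh c = gr_class sb I d k (snd (SOME p. p \<in> c))"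

lemma DD_add: "DD (p + q) = DD p + DD q" by (simp add: twod_simp d_add)
lemma DD_0: "DD 0 = 0" by (simp add: twod_simp d_0 zero_prod_def)

lemma natK1: "nat (int k + 1) = Suc k" by simp

lemma Zt_eq: "ssZ FF DD KK KK (2 - KK) = PP ` Mk"
  unfolding ssZ_def by (auto simp: F2 Fo twod_simp d_0 zero_prod_def)

lemma Dt_eq: "ssDen FF DD KK KK (2 - KK) = Dtc"
proof -
  have a: "ssZ FF DD (KK - 1) (KK + 1) (2 - KK - 1) = PP ` Mk1"
    unfolding ssZ_def by (auto simp: F2 Fo twod_simp d_0 zero_prod_def natK1)
  have b: "ssB FF DD (KK - 1) KK (2 - KK) = PP ` Mk \<inter> DD ` (QQ ` modpow sa I (Suc 0) UNIV)"
    unfolding ssB_def by (simp add: F1 F2)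
  show ?thesis unfolding ssDen_def a b Dtc_def by simp
qed

lemma addsub_Dt: "addsub Dtc"
proof -
  have pa: "PP (x + y) = PP x + PP y" for x y by simp
  have qa: "QQ (x + y) = QQ x + QQ y" for x y by simp
  have "addsub (PP ` Mk1)" by (rule addsub_image[OF addsub_modpow pa])
  moreover have "addsub (PP ` Mk)" by (rule addsub_image[OF addsub_modpow pa])
  moreover have "addsub (QQ ` modpow sa I (Suc 0) UNIV)"
    by (rule addsub_image[OF addsub_modpow qa])
  then have "addsub (DD ` (QQ ` modpow sa I (Suc 0) UNIV))"
    by (rule addsub_image[OF _ DD_add])
  ultimately show ?thesis unfolding Dtc_def by (intro addsub_ssum addsub_Int)
qed

lemma Dt_snd: assumes "t \<in> Dtc" shows "snd t \<in> T"
proof -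
  obtain a b0 where ab0: "a \<in> PP ` Mk1" "b0 \<in> PP ` Mk \<inter> DD ` (QQ ` modpow sa I (Suc 0) UNIV)" "t = a + b0"
    using assms unfolding Dtc_def by (rule ssumE)
  obtain b where ab: "t = a + b" "a \<in> PP ` Mk1" "b \<in> DD ` (QQ ` modpow sa I (Suc 0) UNIV)"
    using ab0 by blast
  obtain m where m: "m \<in> Mk1" "a = PP m" using ab(2) by blast
  obtain x where x: "b = DD (QQ x)" using ab(3) by blast
  have "snd t = m + d x" using ab(1) m x by (simp add: twod_simp)
  moreover have "d x \<in> R" by simp
  then have "m + d x \<in> T" using m(1) by (rule ssumI[rotated])
  ultimately show ?thesis by simp
qed

lemma Mk1_Dt: "y \<in> Mk1 \<Longrightarrow> PP y \<in> Dtc"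
proof -
  assume y: "y \<in> Mk1"
  have "DD (QQ 0) \<in> DD ` (QQ ` modpow sa I (Suc 0) UNIV)" by (intro imageI zero_modpow)
  moreover have "DD (QQ 0) = PP 0" by (simp add: twod_simp d_0)
  moreover have "PP 0 \<in> PP ` Mk" by (intro imageI zero_modpow)
  ultimately have "PP 0 \<in> PP ` Mk \<inter> DD ` (QQ ` modpow sa I (Suc 0) UNIV)" by simp
  then have "PP y + PP 0 \<in> Dtc" unfolding Dtc_def using y by (intro ssumI) auto
  then show ?thesis by simp
qed

lemma Zs_eq: "ssZ FF DD KK 0 1 = Zs"
proof -
  have "\<And>m. sa 1 m = m" using lsa unfolding lmod_def by blast
  then have u: "modpow sa I 0 UNIV = UNIV" by (rule modpow0)
  show ?thesis unfolding ssZ_def by (auto simp: F1 F2 u twod_simp)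
qed

lemma Ds_D: "t \<in> Ds \<Longrightarrow> DD t \<in> Dtc"
proof -
  assume "t \<in> Ds"
  then obtain a b where ab: "t = a + b" "a \<in> ssZ FF DD (KK - 1) 1 0" "b \<in> ssB FF DD (KK - 1) 0 1"
    unfolding ssDen_def ssum_def by auto
  have "b = 0" using ab(3) unfolding ssB_def by (auto simp: Fo twod_simp d_0 zero_prod_def)
  have "DD a \<in> PP ` Mk \<inter> DD ` (QQ ` modpow sa I (Suc 0) UNIV)"
    using ab(2) unfolding ssZ_def by (auto simp: F1 F2)
  moreover have "PP 0 \<in> PP ` Mk1" by (intro imageI zero_modpow)
  ultimately have "PP 0 + DD a \<in> Dtc" unfolding Dtc_def by (intro ssumI)
  moreover have "DD t = PP 0 + DD a" using ab(1) \<open>b = 0\<close> by (simp add: twod_simp)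
  ultimately show ?thesis by simp
qed

lemma Ds0: "0 \<in> Ds"
proof -
  have a: "QQ 0 \<in> ssZ FF DD (KK - 1) 1 0"
    unfolding ssZ_def using k1 by (auto simp: F1 F2 twod_simp d_0 image_iff)
  have b: "QQ 0 \<in> ssB FF DD (KK - 1) 0 1"
    unfolding ssB_def by (auto simp: F1 Fo twod_simp d_0 zero_prod_def image_iff)
  have e: "ssDen FF DD KK 0 1 = ssum (ssZ FF DD (KK - 1) 1 0) (ssB FF DD (KK - 1) 0 1)"
    by (simp add: ssDen_def)
  have z: "QQ 0 + QQ 0 = (0::'a \<times> 'b)" by (simp add: zero_prod_def)
  have "QQ 0 + QQ 0 \<in> Ds" unfolding e by (rule ssumI[OF a b])
  then show ?thesis unfolding z .
qed

lemma Et_carrier: "carrier Et = rc Dtc ` (PP ` Mk)"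
  unfolding ssE_def carrier_FactGroup carrier_subgrp Zt_eq Dt_eq r_coset_subgrp by simp

lemma Et_mult: "A \<otimes>\<^bsub>Et\<^esub> B = ssum A B"
  unfolding ssE_def by (simp add: FactGroup_def set_mult_subgrp)

lemma Et_one: "\<one>\<^bsub>Et\<^esub> = Dtc"
  unfolding ssE_def by (simp add: FactGroup_def Dt_eq)

lemma addsub_PMk: "addsub (PP ` Mk)" by (rule addsub_image[OF addsub_modpow]) simp

lemma Et_group: "comm_group Et"
proof (rule cg_image[OF addsub_PMk Et_carrier])
  show "rc Dtc a \<otimes>\<^bsub>Et\<^esub> rc Dtc b = rc Dtc (a + b)" for a b
    unfolding Et_mult by (rule ssum_rc[OF addsub_Dt])
  show "\<one>\<^bsub>Et\<^esub> = rc Dtc 0" by (simp add: Et_one rc_zero)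
qed

lemma Es_carrier: "carrier Es = rc Ds ` Zs"
  unfolding ssE_def carrier_FactGroup carrier_subgrp Zs_eq r_coset_subgrp by simp

lemma hh_rc: "hh (rc Dtc z) = gr_class sb I d k (snd z)"
proof -
  have "(SOME p. p \<in> rc Dtc z) \<in> rc Dtc z" by (rule rc_some[OF addsubD(1)[OF addsub_Dt]])
  then obtain t where t: "t \<in> Dtc" "(SOME p. p \<in> rc Dtc z) = t + z" by (rule rc_memE)
  have "snd (t + z) - snd z = snd t" by simp
  then have "gr_class sb I d k (snd (t + z)) = gr_class sb I d k (snd z)"
    using Dt_snd[OF t(1)] by (simp only: gr_iff)
  then show ?thesis unfolding hh_def t(2) .
qed

lemma ssd_rc: "ssd FF DD KK 0 1 (rc Ds z) = rc Dtc (DD z)"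
proof -
  have "(SOME p. p \<in> rc Ds z) \<in> rc Ds z" by (rule rc_some[OF Ds0])
  then obtain t where t: "t \<in> Ds" "(SOME p. p \<in> rc Ds z) = t + z" by (rule rc_memE)
  have h: "rc Dtc (DD (t + z)) = rc Dtc (DD z)"
    using rc_eq_iff[OF addsub_Dt] Ds_D[OF t(1)] by (simp add: DD_add)
  have e1: "ssDen FF DD KK (0 + KK) (1 + 1 - KK) = Dtc" using Dt_eq by simp
  show ?thesis unfolding ssd_def e1 r_coset_subgrp t(2) by (rule h)
qed

lemma Img_eq: "ssd FF DD KK 0 1 ` carrier Es = (\<lambda>x. rc Dtc (PP (d x))) ` {x. d x \<in> Mk}"
  unfolding Es_carrier image_image ssd_rc by (simp add: twod_simp image_image)

lemma hh_hom: "group_hom Et (gradedH2 sb I d k) hh"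
proof -
  have "hh \<in> hom Et (gradedH2 sb I d k)"
  proof (rule homI)
    show "hh x \<in> carrier (gradedH2 sb I d k)" if "x \<in> carrier Et" for x
      using that unfolding Et_carrier gr_carrier by (auto simp: hh_rc)
    show "hh (x \<otimes>\<^bsub>Et\<^esub> y) = hh x \<otimes>\<^bsub>gradedH2 sb I d k\<^esub> hh y"
      if "x \<in> carrier Et" "y \<in> carrier Et" for x y
      using that unfolding Et_carrier
      by (auto simp: hh_rc Et_mult ssum_rc[OF addsub_Dt] gr_mult)
  qed
  then show ?thesis using Et_group gr_group
    by (simp add: group_hom_def group_hom_axioms_def comm_group.axioms)
qed

lemma hh_onto: "hh ` carrier Et = carrier (gradedH2 sb I d k)"
proof -
  have "hh ` (rc Dtc ` (PP ` Mk)) = (\<lambda>y. hh (rc Dtc (PP y))) ` Mk" by (simp only: image_image)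
  then show ?thesis unfolding Et_carrier gr_carrier hh_rc by simp
qed

lemma kernel_eq: "kernel Et (gradedH2 sb I d k) hh = ssd FF DD KK 0 1 ` carrier Es"
proof -
  have "kernel Et (gradedH2 sb I d k) hh = (\<lambda>y. rc Dtc (PP y)) ` (Mk \<inter> T)"
  proof -
    have e: "hh (rc Dtc (PP y)) = gr_class sb I d k 0 \<longleftrightarrow> y \<in> T" for y by (simp add: hh_rc gr_iff)
    show ?thesis unfolding kernel_def Et_carrier gr_one using e by blast
  qed
  also have "\<dots> = (\<lambda>x. rc Dtc (PP (d x))) ` {x. d x \<in> Mk}"
  proof (rule equalityI; rule subsetI)
    fix X assume "X \<in> (\<lambda>y. rc Dtc (PP y)) ` (Mk \<inter> T)"
    then obtain y m x where y: "y \<in> Mk" "m \<in> Mk1" "y = m + d x" "X = rc Dtc (PP y)"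
      unfolding ssum_def by auto
    have "d x = y - m" using y by simp
    moreover have "y - m \<in> Mk" using addsubD(4)[OF addsub_modpow, of y sb I k UNIV m] y Mk1_sub by blast
    ultimately have "d x \<in> Mk" by simp
    moreover have "rc Dtc (PP y) = rc Dtc (PP (d x))"
      using rc_eq_iff[OF addsub_Dt] Mk1_Dt[OF y(2)] y(3) by simp
    ultimately show "X \<in> (\<lambda>x. rc Dtc (PP (d x))) ` {x. d x \<in> Mk}" using y by auto
  next
    fix X assume "X \<in> (\<lambda>x. rc Dtc (PP (d x))) ` {x. d x \<in> Mk}"
    then obtain x where x: "d x \<in> Mk" "X = rc Dtc (PP (d x))" by auto
    have "0 + d x \<in> T" by (rule ssumI) auto
    then have "d x \<in> T" by simp
    then show "X \<in> (\<lambda>y. rc Dtc (PP y)) ` (Mk \<inter> T)" using x by auto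
  qed
  finally show ?thesis using Img_eq by simp
qed

lemma hh_coset: assumes c: "c \<in> carrier Et"
  shows "the_elem (hh ` r_coset Et (kernel Et (gradedH2 sb I d k) hh) c) = hh c"
proof -
  interpret gh: group_hom Et "gradedH2 sb I d k" hh by (rule hh_hom)
  let ?K = "kernel Et (gradedH2 sb I d k) hh"
  have "hh ` r_coset Et ?K c = {hh c}"
  proof -
    have e: "hh (u \<otimes>\<^bsub>Et\<^esub> c) = hh c" if "u \<in> ?K" for u
    proof -
      have "u \<in> carrier Et" "hh u = \<one>\<^bsub>gradedH2 sb I d k\<^esub>" using that by (auto simp: kernel_def)
      then show ?thesis using c by simp
    qed
    have o: "\<one>\<^bsub>Et\<^esub> \<in> ?K" by (simp add: kernel_def)
    have "hh ` r_coset Et ?K c = (\<lambda>u. hh (u \<otimes>\<^bsub>Et\<^esub> c)) ` ?K"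
      unfolding r_coset_eq by (simp add: image_image)
    also have "\<dots> = {hh c}" using e o by auto
    finally show ?thesis .
  qed
  then show ?thesis by simp
qed

lemma main_result:
  "\<exists>\<phi>. \<phi> \<in> iso (bockstein_coker sa sb I d k) (gradedH2 sb I d k) \<and>
           (\<forall>y \<in> modpow sb I k UNIV. \<phi> (bock_class sa sb I d k y) = gr_class sb I d k y)"
proof -
  interpret gh: group_hom Et "gradedH2 sb I d k" hh by (rule hh_hom)
  let ?K = "kernel Et (gradedH2 sb I d k) hh"
  have iso: "(\<lambda>X. the_elem (hh ` X)) \<in> iso (Et Mod ?K) (gradedH2 sb I d k)"
    by (rule gh.FactGroup_iso_set[OF hh_onto])
  have e0: "(0::int) + KK = KK" by simp
  have e2: "(1::int) + 1 - KK = 2 - KK" by simp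
  have bc: "bockstein_coker sa sb I d k = Et Mod ?K"
    unfolding bockstein_coker_def ssd_coker_def kernel_eq e0 e2 by (rule refl)
  have bk: "bock_class sa sb I d k y = r_coset Et ?K (rc Dtc (PP y))" for y
    unfolding bock_class_def Let_def kernel_eq e0 e2 Dt_eq r_coset_subgrp by (rule refl)
  have val: "the_elem (hh ` bock_class sa sb I d k y) = gr_class sb I d k y" if y: "y \<in> Mk" for y
  proof -
    have c: "rc Dtc (PP y) \<in> carrier Et" unfolding Et_carrier using y by (intro imageI)
    show ?thesis unfolding bk hh_coset[OF c] hh_rc by simp
  qed
  show ?thesis
    by (rule exI[of _ "\<lambda>X. the_elem (hh ` X)"]) (simp add: bc iso val)
qed

end

theorem propositionA8:
  fixes sa :: "'r::ring_1 \<Rightarrow> 'a::ab_group_add \<Rightarrow> 'a"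
    and sb :: "'r \<Rightarrow> 'b::ab_group_add \<Rightarrow> 'b"
    and I :: "'r set"
    and d :: "'a \<Rightarrow> 'b"
    and k :: nat
  assumes "lmod sa" and "lmod sb"
    and "two_sided_ideal I"
    and "rlinear sa sb d"
    and "k \<ge> 1"
  shows "\<exists>\<phi>. \<phi> \<in> iso (bockstein_coker sa sb I d k) (gradedH2 sb I d k) \<and>
           (\<forall>y \<in> modpow sb I k UNIV. \<phi> (bock_class sa sb I d k y) = gr_class sb I d k y)"
  by (rule main_result[OF assms(1) assms(3) assms(4) assms(5)])

end
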